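(* Let $n\in\mathbb{N}$ and $\varepsilon\in(0,1]$. In the cumulative dual access model, any testing algorithm for uniformity over $[n]$ (i.e., for the property $\mathcal{P}=\{\mathcal{U}_n\}$, where $\mathcal{U}_n$ is the uniform distribution on $[n]$) with distance parameter $\varepsilon$ must have sample (query) complexity $\Omega(1/\varepsilon)$.
   Context: Distributions are over $[n]=\{1,\dots,n\}$. The total variation distance is $d_{TV}(D_1,D_2)=\frac12\sum_{i\in[n]}|D_1(i)-D_2(i)|$, and $d_{TV}(D,\mathcal{P})=\min_{D'\in\mathcal{P}}d_{TV}(D,D')$. In the cumulative dual access model, an algorithm accesses an unknown distribution $D$ via two oracles: a sampling oracle $\mathsf{SAMP}_D$ that returns $i\in[n]$ with probability $D(i)$, independently of all previous calls, and a cumulative evaluation oracle $\mathsf{CEVAL}_D$ that on query $j\in[n]$ returns $D([j])=\sum_{i=1}^j D(i)$. Each call to either oracle counts as one query. A $q$-query testing algorithm for $\mathcal{P}$ takes $n$, $\varepsilon\in(0,1]$ and oracle access to $D$, makes at most $q(\varepsilon,n)$ oracle calls, and outputs ACCEPT with probability at least $2/3$ if $D\in\mathcal{P}$ and REJECT with probability at least $2/3$ if $d_{TV}(D,\mathcal{P})\ge\varepsilon$. *)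

theory Defs
  imports "HOL-Probability.Probability"
begin

text \<open>Adaptive randomized query algorithms in the cumulative dual access model,
  represented as decision trees.  Leaves output ACCEPT (True) or REJECT (False);
  a Samp node calls the sampling oracle and branches on the returned element;
  a Ceval node queries the cumulative evaluation oracle at j and branches on the
  returned real value; a Rand node flips internal (discrete) random coins.\<close>

datatype alg =
    Out bool
  | Samp "nat \<Rightarrow> alg"
  | Ceval nat "real \<Rightarrow> alg"
  | Rand "alg pmf"

definition ceval :: "nat pmf \<Rightarrow> nat \<Rightarrow> real" where
  "ceval D j = (\<Sum>i\<in>{1..j}. pmf D i)"

primrec run :: "nat pmf \<Rightarrow> alg \<Rightarrow> bool pmf" where
  "run D (Out b) = return_pmf b"
| "run D (Samp f) = bind_pmf D (\<lambda>i. run D (f i))"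
| "run D (Ceval j g) = run D (g (ceval D j))"
| "run D (Rand p) = join_pmf (map_pmf (run D) p)"

primrec queries_le :: "alg \<Rightarrow> nat \<Rightarrow> bool" where
  "queries_le (Out b) q = True"
| "queries_le (Samp f) q = (q > 0 \<and> (\<forall>i. queries_le (f i) (q - 1)))"
| "queries_le (Ceval j g) q = (q > 0 \<and> (\<forall>x. queries_le (g x) (q - 1)))"
| "queries_le (Rand p) q = (\<forall>h\<in>set_pmf (map_pmf queries_le p). h q)"

definition distr_on :: "nat \<Rightarrow> nat pmf \<Rightarrow> bool" where
  "distr_on n D \<longleftrightarrow> set_pmf D \<subseteq> {1..n}"

definition unif :: "nat \<Rightarrow> nat pmf" where
  "unif n = pmf_of_set {1..n}"

definition dtv :: "nat \<Rightarrow> nat pmf \<Rightarrow> nat pmf \<Rightarrow> real" where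
  "dtv n D1 D2 = (1/2) * (\<Sum>i\<in>{1..n}. \<bar>pmf D1 i - pmf D2 i\<bar>)"

text \<open>T is a q-query testing algorithm for uniformity over [n] with distance
  parameter eps (the property is the singleton {U_n}, so d_TV(D,P) = d_TV(D,U_n)).\<close>
definition unif_tester :: "nat \<Rightarrow> real \<Rightarrow> nat \<Rightarrow> alg \<Rightarrow> bool" where
  "unif_tester n eps q T \<longleftrightarrow>
     queries_le T q \<and>
     pmf (run (unif n) T) True \<ge> 2/3 \<and>
     (\<forall>D. distr_on n D \<and> dtv n D (unif n) \<ge> eps \<longrightarrow> pmf (run D T) False \<ge> 2/3)"

end

theory Submission
  imports Defs
begin

lemma int_bd: "(\<And>x. \<bar>f x\<bar> \<le> B) \<Longrightarrow> integrable (measure_pmf M) (f :: 'a \<Rightarrow> real)"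
  by (rule measure_pmf.integrable_const_bound[where B=B]) auto

lemma abs_exp_le: "integrable (measure_pmf M) (f :: 'a \<Rightarrow> real) \<Longrightarrow>
   \<bar>measure_pmf.expectation M f\<bar> \<le> measure_pmf.expectation M (\<lambda>x. \<bar>f x\<bar>)"
  using integral_norm_bound[of M f] by simp

lemma pmf_diff_le1: "\<bar>pmf (a::bool pmf) x - pmf b y\<bar> \<le> 1"
  using pmf_le_1[of a x] pmf_le_1[of b y] pmf_nonneg[of a x] pmf_nonneg[of b y] by linarith

lemma main:
  fixes U :: "nat pmf" and D :: "nat \<Rightarrow> nat pmf" and K :: nat and \<rho> :: real
  assumes rho: "\<rho> \<ge> 0"
  and ceq: "\<And>j. \<exists>k0. \<forall>k. k \<noteq> k0 \<longrightarrow> ceval (D k) j = ceval U j"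
  and samp: "\<And>k g. k < K \<Longrightarrow> (\<And>i. 0 \<le> g i \<and> g i \<le> 1) \<Longrightarrow>
     \<bar>measure_pmf.expectation (D k) g - measure_pmf.expectation U g\<bar> \<le> \<rho>"
  shows "queries_le T q \<Longrightarrow>
    (\<Sum>k<K. \<bar>pmf (run (D k) T) True - pmf (run U T) True\<bar>) \<le> real q * (1 + K*\<rho>)"
proof (induction T arbitrary: q)
  case (Out x)
  then show ?case using rho by simp
next
  case (Samp f)
  from Samp.prems have q: "q > 0" and qf: "\<And>i. queries_le (f i) (q - 1)" by auto
  define h where "h k i = pmf (run (D k) (f i)) True" for k i
  define h0 where "h0 i = pmf (run U (f i)) True" for i
  have hb: "0 \<le> h k i \<and> h k i \<le> 1" for k i unfolding h_def by (simp add: pmf_le_1)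
  have h0b: "0 \<le> h0 i \<and> h0 i \<le> 1" for i unfolding h0_def by (simp add: pmf_le_1)
  have ih: "(\<Sum>k<K. \<bar>h k i - h0 i\<bar>) \<le> real (q-1) * (1 + K*\<rho>)" for i
    unfolding h_def h0_def using Samp.IH[of "f i" "q-1"] qf by auto
  have intk: "integrable (measure_pmf M) (h k)" for k M
    by (rule int_bd[where B=1]) (use hb in auto)
  have int0: "integrable (measure_pmf M) h0" for M
    by (rule int_bd[where B=1]) (use h0b in auto)
  have step: "\<bar>measure_pmf.expectation (D k) (h k) - measure_pmf.expectation U h0\<bar>
      \<le> \<rho> + measure_pmf.expectation U (\<lambda>i. \<bar>h k i - h0 i\<bar>)" if "k < K" for k
  proof -
    have a: "\<bar>measure_pmf.expectation (D k) (h k) - measure_pmf.expectation U (h k)\<bar> \<le> \<rho>"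
      using samp[OF that, of "h k"] hb by blast
    have "measure_pmf.expectation U (h k) - measure_pmf.expectation U h0
        = measure_pmf.expectation U (\<lambda>i. h k i - h0 i)"
      using intk int0 by (simp add: Bochner_Integration.integral_diff)
    moreover have "\<bar>measure_pmf.expectation U (\<lambda>i. h k i - h0 i)\<bar>
        \<le> measure_pmf.expectation U (\<lambda>i. \<bar>h k i - h0 i\<bar>)"
      by (rule abs_exp_le) (use intk int0 in auto)
    ultimately show ?thesis using a by linarith
  qed
  have "(\<Sum>k<K. \<bar>pmf (run (D k) (Samp f)) True - pmf (run U (Samp f)) True\<bar>)
      = (\<Sum>k<K. \<bar>measure_pmf.expectation (D k) (h k) - measure_pmf.expectation U h0\<bar>)"
    by (simp add: pmf_bind h_def[abs_def] h0_def[abs_def])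
  also have "\<dots> \<le> (\<Sum>k<K. \<rho> + measure_pmf.expectation U (\<lambda>i. \<bar>h k i - h0 i\<bar>))"
    by (rule sum_mono) (use step in auto)
  also have "\<dots> = K * \<rho> + measure_pmf.expectation U (\<lambda>i. \<Sum>k<K. \<bar>h k i - h0 i\<bar>)"
  proof -
    have "measure_pmf.expectation U (\<lambda>i. \<Sum>k<K. \<bar>h k i - h0 i\<bar>)
       = (\<Sum>k<K. measure_pmf.expectation U (\<lambda>i. \<bar>h k i - h0 i\<bar>))"
      by (rule Bochner_Integration.integral_sum) (use intk int0 in auto)
    then show ?thesis by (simp add: sum.distrib)
  qed
  also have "\<dots> \<le> K * \<rho> + real (q-1) * (1 + K*\<rho>)"
  proof -
    have "measure_pmf.expectation U (\<lambda>i. \<Sum>k<K. \<bar>h k i - h0 i\<bar>) \<le> real (q-1) * (1 + K*\<rho>)"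
      by (rule measure_pmf.integral_le_const) (use intk int0 ih in auto)
    then show ?thesis by simp
  qed
  also have "\<dots> \<le> real q * (1 + K*\<rho>)"
  proof -
    have "real (q-1) = real q - 1" using q by simp
    then show ?thesis using rho by (simp add: algebra_simps)
  qed
  finally show ?case .
next
  case (Ceval j g)
  from Ceval.prems have q: "q > 0" and qg: "\<And>x. queries_le (g x) (q - 1)" by auto
  obtain k0 where k0: "\<And>k. k \<noteq> k0 \<Longrightarrow> ceval (D k) j = ceval U j" using ceq by blast
  define v where "v = ceval U j"
  have ih: "(\<Sum>k<K. \<bar>pmf (run (D k) (g v)) True - pmf (run U (g v)) True\<bar>) \<le> real (q-1) * (1 + K*\<rho>)"
    using Ceval.IH[of "g v" "q-1"] qg by auto
  have "(\<Sum>k<K. \<bar>pmf (run (D k) (Ceval j g)) True - pmf (run U (Ceval j g)) True\<bar>)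
     \<le> (\<Sum>k<K. \<bar>pmf (run (D k) (g v)) True - pmf (run U (g v)) True\<bar> + (if k = k0 then 1 else 0))"
  proof (rule sum_mono)
    fix k assume "k \<in> {..<K}"
    show "\<bar>pmf (run (D k) (Ceval j g)) True - pmf (run U (Ceval j g)) True\<bar>
     \<le> \<bar>pmf (run (D k) (g v)) True - pmf (run U (g v)) True\<bar> + (if k = k0 then 1 else 0)"
    proof (cases "k = k0")
      case True
      have "\<bar>pmf (run (D k) (Ceval j g)) True - pmf (run U (Ceval j g)) True\<bar> \<le> 1"
        by (rule pmf_diff_le1)
      then show ?thesis using True by simp
    next
      case False then show ?thesis using k0[OF False] by (simp add: v_def)
    qed
  qed
  also have "\<dots> \<le> real (q-1) * (1 + K*\<rho>) + 1"
  proof -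
    have "(\<Sum>k<K. (if k = k0 then 1 else 0::real)) \<le> 1" by simp
    then show ?thesis using ih by (simp add: sum.distrib)
  qed
  also have "\<dots> \<le> real q * (1 + K*\<rho>)"
  proof -
    have "real (q-1) = real q - 1" using q by simp
    then show ?thesis using rho by (simp add: algebra_simps)
  qed
  finally show ?case .
next
  case (Rand p)
  have qa: "\<And>a. a \<in> set_pmf p \<Longrightarrow> queries_le a q" using Rand.prems by auto
  define h where "h k a = pmf (run (D k) a) True" for k a
  define h0 where "h0 a = pmf (run U a) True" for a
  have hb: "0 \<le> h k i \<and> h k i \<le> 1" for k i unfolding h_def by (simp add: pmf_le_1)
  have h0b: "0 \<le> h0 i \<and> h0 i \<le> 1" for i unfolding h0_def by (simp add: pmf_le_1)
  have intk: "integrable (measure_pmf M) (h k)" for k M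
    by (rule int_bd[where B=1]) (use hb in auto)
  have int0: "integrable (measure_pmf M) h0" for M
    by (rule int_bd[where B=1]) (use h0b in auto)
  have "(\<Sum>k<K. \<bar>pmf (run (D k) (Rand p)) True - pmf (run U (Rand p)) True\<bar>)
      = (\<Sum>k<K. \<bar>measure_pmf.expectation p (\<lambda>a. h k a - h0 a)\<bar>)"
  proof -
    have e: "measure_pmf.expectation p (\<lambda>a. h k a - h0 a) = measure_pmf.expectation p (h k) - measure_pmf.expectation p h0" for k
      using intk int0 by (rule Bochner_Integration.integral_diff)
    show ?thesis unfolding e by (simp add: pmf_join integral_map_pmf h_def[abs_def] h0_def[abs_def])
  qed
  also have "\<dots> \<le> (\<Sum>k<K. measure_pmf.expectation p (\<lambda>a. \<bar>h k a - h0 a\<bar>))"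
    by (rule sum_mono, rule abs_exp_le) (use intk int0 in auto)
  also have "\<dots> = measure_pmf.expectation p (\<lambda>a. \<Sum>k<K. \<bar>h k a - h0 a\<bar>)"
    by (rule Bochner_Integration.integral_sum[symmetric]) (use intk int0 in auto)
  also have "\<dots> \<le> real q * (1 + K*\<rho>)"
  proof (rule measure_pmf.integral_le_const)
    show "integrable (measure_pmf p) (\<lambda>a. \<Sum>k<K. \<bar>h k a - h0 a\<bar>)" using intk int0 by auto
    show "AE x in measure_pmf p. (\<Sum>k<K. \<bar>h k x - h0 x\<bar>) \<le> real q * (1 + real K * \<rho>)"
      using Rand.IH qa unfolding h_def h0_def by (auto intro!: AE_pmfI)
  qed
  finally show ?case .
qed

lemma set_unif: "n \<ge> 1 \<Longrightarrow> set_pmf (unif n) = {1..n}"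
  unfolding unif_def by (simp add: set_pmf_of_set)

lemma pmf_unif: "n \<ge> 1 \<Longrightarrow> i \<in> {1..n} \<Longrightarrow> pmf (unif n) i = 1 / real n"
  unfolding unif_def by (simp add: pmf_of_set)

lemma ceval_meas: "ceval D j = measure_pmf.prob D {1..j}"
  unfolding ceval_def by (simp add: measure_measure_pmf_finite)

lemma bool_pmf: "pmf (p::bool pmf) True + pmf p False = 1"
proof -
  have "sum (pmf p) UNIV = 1" by (rule sum_pmf_eq_1) auto
  then show ?thesis by (simp add: UNIV_bool)
qed

definition phi :: "nat \<Rightarrow> nat \<Rightarrow> nat \<Rightarrow> nat" where
  "phi a m i = (if a < i \<and> i \<le> a+m then a+m else i)"

lemma phi_pre: "j \<le> a \<or> a+m \<le> j \<Longrightarrow> m \<ge> 1 \<Longrightarrow>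
   phi a m -` {1..j} \<inter> {1..n} = {1..j} \<inter> {1..n}"
  unfolding phi_def by (auto split: if_splits)

lemma phi_id: "i \<notin> {a+1..a+m-1} \<Longrightarrow> phi a m i = i"
  unfolding phi_def by auto

lemma phi_range: "a+m \<le> n \<Longrightarrow> m \<ge> 1 \<Longrightarrow> phi a m ` {1..n} \<subseteq> {1..n}"
  unfolding phi_def by auto

lemma phi_notin: "i \<in> {a+1..a+m-1} \<Longrightarrow> i \<notin> phi a m ` X"
  unfolding phi_def by auto

lemma lower:
  fixes n m K q :: nat and eps :: real and T :: alg
  assumes n: "n \<ge> 1" and m: "m \<ge> 1" and Km: "K*m \<le> n"
    and eps: "eps \<le> (real m - 1) / (2 * real n)"
    and tester: "unif_tester n eps q T"
  shows "real K \<le> 6 * real q"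
proof -
  define U where "U = unif n"
  define D where "D k = map_pmf (phi (k*m) m) U" for k
  define \<rho> where "\<rho> = (real m - 1) / real n"
  have sU: "set_pmf U = {1..n}" using n by (simp add: U_def set_unif)
  have rho: "\<rho> \<ge> 0" using m by (simp add: \<rho>_def)
  have ceq: "\<exists>k0. \<forall>k. k \<noteq> k0 \<longrightarrow> ceval (D k) j = ceval U j" for j
  proof (intro exI allI impI)
    fix k assume k: "k \<noteq> j div m"
    have jk: "j \<le> k*m \<or> k*m+m \<le> j"
    proof (rule ccontr)
      assume "\<not> (j \<le> k*m \<or> k*m+m \<le> j)"
      then have "k*m \<le> j" "j < (k+1)*m" by auto
      then have "j div m = k" by (simp add: div_nat_eqI mult.commute)
      with k show False by simp
    qed
    have "phi (k*m) m -` {1..j} \<inter> {1..n} = {1..j} \<inter> {1..n}"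
      using jk m by (rule phi_pre)
    then have "measure_pmf.prob U (phi (k*m) m -` {1..j}) = measure_pmf.prob U {1..j}"
      by (metis measure_Int_set_pmf sU)
    then show "ceval (D k) j = ceval U j"
      by (simp add: ceval_meas D_def measure_map_pmf)
  qed
  have samp: "\<bar>measure_pmf.expectation (D k) g - measure_pmf.expectation U g\<bar> \<le> \<rho>"
    if g: "\<And>i. 0 \<le> g i \<and> g i \<le> 1" for k and g :: "nat \<Rightarrow> real"
  proof -
    define B where "B = {k*m+1..k*m+m-1}"
    have pt: "\<bar>g (phi (k*m) m i) - g i\<bar> \<le> indicator B i" for i
    proof (cases "i \<in> B")
      case True then show ?thesis using g[of i] g[of "phi (k*m) m i"] by auto
    next
      case False
      then have "phi (k*m) m i = i" unfolding B_def by (rule phi_id)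
      then show ?thesis using False by simp
    qed
    have ig: "integrable (measure_pmf M) g" for M by (rule int_bd[where B=1]) (use g in auto)
    have igp: "integrable (measure_pmf M) (\<lambda>i. g (phi (k*m) m i))" for M
      by (rule int_bd[where B=1]) (use g in auto)
    have "measure_pmf.expectation (D k) g - measure_pmf.expectation U g
        = measure_pmf.expectation U (\<lambda>i. g (phi (k*m) m i) - g i)"
      using igp ig by (simp add: D_def integral_map_pmf Bochner_Integration.integral_diff)
    also have "\<bar>\<dots>\<bar> \<le> measure_pmf.expectation U (\<lambda>i. \<bar>g (phi (k*m) m i) - g i\<bar>)"
      by (rule abs_exp_le) (use ig igp in auto)
    also have "\<dots> \<le> measure_pmf.expectation U (indicator B)"
    proof -
      have "integrable (measure_pmf U) (indicator B :: nat \<Rightarrow> real)"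
        by (rule int_bd[where B=1]) (simp add: indicator_def)
      then show ?thesis by (intro integral_mono) (use ig igp pt in auto)
    qed
    also have "\<dots> = measure_pmf.prob U B" by simp
    also have "\<dots> = card ({1..n} \<inter> B) / real n"
      using n by (simp add: U_def unif_def measure_pmf_of_set)
    also have "\<dots> \<le> \<rho>"
    proof -
      have "card ({1..n} \<inter> B) \<le> card B" by (rule card_mono) (auto simp: B_def)
      also have "card B = m - 1" using m by (simp add: B_def)
      finally have "real (card ({1..n} \<inter> B)) \<le> real m - 1" using m by linarith
      then show ?thesis unfolding \<rho>_def using n by (simp add: divide_right_mono)
    qed
    finally show ?thesis by simp
  qed
  have err: "1/3 \<le> \<bar>pmf (run (D k) T) True - pmf (run U T) True\<bar>" if k: "k < K" for k
  proof -
    have kb: "k*m+m \<le> n"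
    proof -
      have "(k+1)*m \<le> K*m" using k by (intro mult_right_mono) auto
      then show ?thesis using Km by simp
    qed
    have sD: "set_pmf (D k) = phi (k*m) m ` {1..n}" by (simp add: D_def sU)
    have distr: "distr_on n (D k)" unfolding distr_on_def sD using kb m
      by (rule phi_range)
    define S where "S = {k*m+1..k*m+m-1}"
    have zero: "pmf (D k) i = 0" if "i \<in> S" for i
    proof -
      have "i \<notin> set_pmf (D k)" using that unfolding sD S_def by (rule phi_notin)
      then show ?thesis by (simp add: set_pmf_iff)
    qed
    have "(real m - 1) / (2 * real n) \<le> dtv n (D k) U"
    proof -
      have SS: "S \<subseteq> {1..n}" using kb by (auto simp: S_def)
      have "(\<Sum>i\<in>S. \<bar>pmf (D k) i - pmf U i\<bar>) = (\<Sum>i\<in>S. 1 / real n)"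
        by (rule sum.cong) (use zero SS n in \<open>auto simp: U_def pmf_unif\<close>)
      also have "\<dots> = (real m - 1) / real n" using m by (simp add: S_def of_nat_diff)
      finally have e: "(\<Sum>i\<in>S. \<bar>pmf (D k) i - pmf U i\<bar>) = (real m - 1) / real n" .
      have "(\<Sum>i\<in>S. \<bar>pmf (D k) i - pmf U i\<bar>) \<le> (\<Sum>i\<in>{1..n}. \<bar>pmf (D k) i - pmf U i\<bar>)"
        by (rule sum_mono2) (use SS in auto)
      then have s: "(real m - 1) / real n \<le> (\<Sum>i\<in>{1..n}. \<bar>pmf (D k) i - pmf U i\<bar>)"
        using e by linarith
      have "(real m - 1) / (2 * real n) = (1/2) * ((real m - 1) / real n)" by simp
      also have "\<dots> \<le> (1/2) * (\<Sum>i\<in>{1..n}. \<bar>pmf (D k) i - pmf U i\<bar>)"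
        using s by (intro mult_left_mono) auto
      finally show ?thesis unfolding dtv_def .
    qed
    then have far: "dtv n (D k) (unif n) \<ge> eps" using eps by (simp add: U_def)
    then have "pmf (run (D k) T) False \<ge> 2/3" using tester distr unfolding unif_tester_def by blast
    moreover have "pmf (run U T) True \<ge> 2/3" using tester unfolding unif_tester_def U_def by blast
    ultimately show ?thesis using bool_pmf[of "run (D k) T"] by linarith
  qed
  have q: "queries_le T q" using tester unfolding unif_tester_def by blast
  have "real K / 3 = (\<Sum>k<K. 1/3::real)" by simp
  also have "\<dots> \<le> (\<Sum>k<K. \<bar>pmf (run (D k) T) True - pmf (run U T) True\<bar>)"
    by (rule sum_mono) (use err in auto)
  also have "\<dots> \<le> real q * (1 + K*\<rho>)"
    by (rule main[OF rho ceq samp q])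
  also have "\<dots> \<le> real q * 2"
  proof -
    have "real K * (real m - 1) \<le> real K * real m" by (intro mult_left_mono) auto
    also have "\<dots> \<le> real n" using Km by (metis of_nat_le_iff of_nat_mult)
    finally have "K * \<rho> \<le> 1" unfolding \<rho>_def using n by (simp add: field_simps)
    then show ?thesis by (intro mult_left_mono) auto
  qed
  finally show ?thesis by linarith
qed


theorem theorem4:
  shows "\<exists>c>0. \<exists>eps0>0. \<forall>eps. 0 < eps \<and> eps \<le> eps0 \<longrightarrow>
           (\<exists>N. \<forall>n\<ge>N. \<forall>q T. unif_tester n eps q T \<longrightarrow> real q \<ge> c / eps)"
proof -
  have main: "\<exists>N. \<forall>n\<ge>N. \<forall>q T. unif_tester n eps q T \<longrightarrow> real q \<ge> (1/36) / eps"
    if e0: "0 < eps" and e1: "eps \<le> 1/6" for eps :: real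
  proof (intro exI[of _ "nat \<lceil>2/eps\<rceil> + 1"] allI impI)
    fix n q T assume nN: "nat \<lceil>2/eps\<rceil> + 1 \<le> n" and t: "unif_tester n eps q T"
    have n1: "n \<ge> 1" using nN by simp
    have "2/eps \<le> real (nat \<lceil>2/eps\<rceil>)" by linarith
    then have "2/eps \<le> real n" using nN by linarith
    then have en: "2 \<le> eps * real n" using e0 by (simp add: field_simps)
    define m where "m = nat \<lceil>2*eps*real n\<rceil> + 1"
    define K where "K = n div m"
    have m1: "m \<ge> 1" by (simp add: m_def)
    have c0: "0 \<le> \<lceil>2*eps*real n\<rceil>" using en by linarith
    have rm: "real m - 1 = of_int \<lceil>2*eps*real n\<rceil>" using c0 by (simp add: m_def)
    have mlo: "2*eps*real n \<le> real m - 1" unfolding rm by linarith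
    have mhi: "real m \<le> 3*eps*real n" using rm en by linarith
    have epsb: "eps \<le> (real m - 1) / (2 * real n)" using mlo n1 by (simp add: field_simps)
    have Km: "K*m \<le> n" by (simp add: K_def)
    have K6: "real K \<le> 6 * real q" by (rule lower[OF n1 m1 Km epsb t])
    have "n < (K+1)*m" unfolding K_def using m1
      by (metis add.commute div_mult_mod_eq mod_less_divisor mult.commute add_mult_distrib2 nat_mult_1_right
           nat_add_left_cancel_less le_less_trans less_le_trans not_one_le_zero zero_less_iff_neq_zero)
    then have "real n < (real K + 1) * real m" by (metis of_nat_1 of_nat_add of_nat_less_iff of_nat_mult)
    also have "\<dots> \<le> (real K + 1) * (3*eps*real n)" using mhi by (intro mult_left_mono) auto
    finally have h: "real n * 1 < real n * ((real K + 1) * (3*eps))" by (simp add: algebra_simps)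
    have np: "0 < real n" using n1 by simp
    have "1 < (real K + 1) * (3*eps)" using h mult_less_cancel_left_pos[OF np] by blast
    then have "1/(3*eps) < real K + 1" using e0 by (simp add: field_simps)
    moreover have "1/(6*eps) \<ge> 1" using e0 e1 by (simp add: field_simps)
    moreover have "1/(3*eps) = 2 * (1/(6*eps))" by (simp add: field_simps)
    ultimately have "1/(6*eps) \<le> real K" by linarith
    then have "1/(36*eps) \<le> real q" using K6 by (simp add: field_simps)
    then show "real q \<ge> (1/36) / eps" by simp
  qed
  show ?thesis
    apply (rule exI[where x="1/36::real"])
    apply (rule conjI, simp)
    apply (rule exI[where x="1/6::real"])
    apply (rule conjI, simp)
    using main by blast
qed

end
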